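(* For every deterministic local policy D-Local there exists a collectible reward decomposition MDP with $n$ rewards and discount factor $\gamma=1-1/n$ such that $\frac{\text{D-Local}}{\text{OPT}}\le\frac{24}{n}$, where D-Local also denotes the value of the policy on that MDP.
   Context: A collectible reward decomposition MDP is an MDP with deterministic dynamics, an initial state $s_0$, discount $\gamma$, and $n$ reward states $s_1,\dots,s_n$; visiting $s_i$ for the first time yields reward $1$ and each reward can be collected only once. For each $j$ there is an option $o_j$ that follows a shortest path to $s_j$ and terminates when collecting it; its value from state $x$ is $V_j(x)=\gamma^{d(x,s_j)}$ where $d$ is shortest-path distance. A local policy is a mapping $\pi(x,h,\{V_i(x)\}_{i=1}^n)\to\Delta(\{o_i\}_{i=1}^n)$ from the current state $x$, the history $h$ of previous steps (including which rewards were collected) and the option values at $x$, to a distribution over options; it is deterministic if it always outputs a point mass. The value of a policy is its expected discounted return $\sum_k\gamma^{T_k}$ ($T_k$ the time the $k$-th reward is collected), and $\text{OPT}$ is the maximum over all orders of collecting the rewards of the discounted return, i.e. $\max_{(i_1,\dots,i_n)}\sum_{j=0}^{n-1}\gamma^{\sum_{t=0}^{j}d_{i_t,i_{t+1}}}$ with $i_0=s_0$. *)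

theory Defs
  imports Complex_Main "HOL-Combinatorics.Permutations"
begin

text \<open>States are natural numbers; the dynamics is given by a transition relation E
  (the pairs (x, T(x,a)) over actions a) on a finite state set S.\<close>

definition sp_dist :: "(nat \<times> nat) set \<Rightarrow> nat \<Rightarrow> nat \<Rightarrow> nat" where
  "sp_dist E x y = (LEAST k. (x, y) \<in> E ^^ k)"

text \<open>nxt i x is the next state on the shortest path followed by option o_i from x.\<close>
definition crd_mdp :: "nat \<Rightarrow> nat set \<Rightarrow> (nat \<times> nat) set \<Rightarrow> nat \<Rightarrow> (nat \<Rightarrow> nat)
    \<Rightarrow> (nat \<Rightarrow> nat \<Rightarrow> nat) \<Rightarrow> bool" where
  "crd_mdp n S E s0 s nxt \<longleftrightarrow>
     finite S \<and> E \<subseteq> S \<times> S \<and> (\<forall>x\<in>S. \<exists>y. (x, y) \<in> E) \<and>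
     s0 \<in> S \<and> s ` {1..n} \<subseteq> S \<and> inj_on s {1..n} \<and>
     (\<forall>x\<in>S. \<forall>i\<in>{1..n}. (x, s i) \<in> E\<^sup>*) \<and>
     (\<forall>x\<in>S. \<forall>i\<in>{1..n}. x \<noteq> s i \<longrightarrow>
        (x, nxt i x) \<in> E \<and> Suc (sp_dist E (nxt i x) (s i)) = sp_dist E x (s i))"

definition option_values :: "nat \<Rightarrow> real \<Rightarrow> (nat \<times> nat) set \<Rightarrow> (nat \<Rightarrow> nat) \<Rightarrow> nat \<Rightarrow> real list" where
  "option_values n \<gamma> E s x = map (\<lambda>i. \<gamma> ^ sp_dist E x (s i)) [1..<Suc n]"

text \<open>History entry for each previous decision: state at the decision, option values there,
  the option chosen, and the set of reward indices collected after executing it.\<close>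
type_synonym hist = "(nat \<times> real list \<times> nat \<times> nat set) list"
type_synonym det_local_policy = "nat \<Rightarrow> hist \<Rightarrow> real list \<Rightarrow> nat"

definition collected :: "nat \<Rightarrow> (nat \<Rightarrow> nat) \<Rightarrow> nat \<Rightarrow> hist \<Rightarrow> nat set" where
  "collected n s s0 h = (if h = [] then {i \<in> {1..n}. s i = s0} else snd (snd (snd (last h))))"

text \<open>Decision-level run: (state, elapsed time, history) before the k-th decision.\<close>
fun run :: "nat \<Rightarrow> real \<Rightarrow> (nat \<times> nat) set \<Rightarrow> nat \<Rightarrow> (nat \<Rightarrow> nat) \<Rightarrow> (nat \<Rightarrow> nat \<Rightarrow> nat)
    \<Rightarrow> det_local_policy \<Rightarrow> nat \<Rightarrow> nat \<times> nat \<times> hist" where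
  "run n \<gamma> E s0 s nxt \<pi> 0 = (s0, 0, [])"
| "run n \<gamma> E s0 s nxt \<pi> (Suc k) =
    (case run n \<gamma> E s0 s nxt \<pi> k of (x, t, h) \<Rightarrow>
      (let v = option_values n \<gamma> E s x; j = \<pi> x h v; dd = sp_dist E x (s j);
           C = collected n s s0 h \<union> {i \<in> {1..n}. \<exists>m\<le>dd. (nxt j ^^ m) x = s i}
       in (s j, t + dd, h @ [(x, v, j, C)])))"

definition visit_times :: "nat \<Rightarrow> real \<Rightarrow> (nat \<times> nat) set \<Rightarrow> nat \<Rightarrow> (nat \<Rightarrow> nat) \<Rightarrow> (nat \<Rightarrow> nat \<Rightarrow> nat)
    \<Rightarrow> det_local_policy \<Rightarrow> nat \<Rightarrow> nat set" where
  "visit_times n \<gamma> E s0 s nxt \<pi> i =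
     {t + m | k x t h m. run n \<gamma> E s0 s nxt \<pi> k = (x, t, h) \<and>
        (let j = \<pi> x h (option_values n \<gamma> E s x) in
           m \<le> sp_dist E x (s j) \<and> (nxt j ^^ m) x = s i)}"

definition policy_value :: "nat \<Rightarrow> real \<Rightarrow> (nat \<times> nat) set \<Rightarrow> nat \<Rightarrow> (nat \<Rightarrow> nat) \<Rightarrow> (nat \<Rightarrow> nat \<Rightarrow> nat)
    \<Rightarrow> det_local_policy \<Rightarrow> real" where
  "policy_value n \<gamma> E s0 s nxt \<pi> =
     (\<Sum>i \<in> {i \<in> {1..n}. visit_times n \<gamma> E s0 s nxt \<pi> i \<noteq> {}}.
        \<gamma> ^ (LEAST t. t \<in> visit_times n \<gamma> E s0 s nxt \<pi> i))"

definition order_value :: "nat \<Rightarrow> real \<Rightarrow> (nat \<times> nat) set \<Rightarrow> nat \<Rightarrow> (nat \<Rightarrow> nat) \<Rightarrow> (nat \<Rightarrow> nat) \<Rightarrow> real" where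
  "order_value n \<gamma> E s0 s \<sigma> =
     (let pt = (\<lambda>t. if t = 0 then s0 else s (\<sigma> t)) in
      \<Sum>j = 1..n. \<gamma> ^ (\<Sum>t = 1..j. sp_dist E (pt (t - 1)) (pt t)))"

definition OPT :: "nat \<Rightarrow> real \<Rightarrow> (nat \<times> nat) set \<Rightarrow> nat \<Rightarrow> (nat \<Rightarrow> nat) \<Rightarrow> real" where
  "OPT n \<gamma> E s0 s = Max {order_value n \<gamma> E s0 s \<sigma> | \<sigma>. \<sigma> permutes {1..n}}"

end

theory Submission
  imports Defs
begin

definition SS :: "nat \<Rightarrow> nat \<Rightarrow> nat set" where "SS n L = {0..n+L}"

definition EE :: "nat \<Rightarrow> nat \<Rightarrow> nat \<Rightarrow> (nat \<times> nat) set" where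
 "EE n L j = {(x,y). x \<le> n + L \<and> y \<le> n + L \<and> (x = y \<or> (x \<le> n \<and> x \<noteq> j \<and> 1 \<le> y \<and> y \<le> n)
    \<or> (x = j \<and> y = n+1) \<or> (n < x \<and> x < n + L \<and> y = x+1) \<or> (x = n+L \<and> y = 0))}"

definition HH :: "nat \<Rightarrow> nat \<Rightarrow> nat \<Rightarrow> nat \<Rightarrow> nat \<Rightarrow> nat" where
 "HH n L j r x = (if x = r then 0 else if x \<le> n \<and> x \<noteq> j then 1 else if x = j then L+2 else n + L + 2 - x)"

definition NX :: "nat \<Rightarrow> nat \<Rightarrow> nat \<Rightarrow> nat \<Rightarrow> nat \<Rightarrow> nat" where
 "NX n L j r x = (if x = r then r else if x \<le> n \<and> x \<noteq> j then r else if x = j then n+1 else if x < n+L then x+1 else 0)"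

lemma E_H:
  assumes "(x,y) \<in> EE n L j" "j \<in> {1..n}" "r \<in> {1..n}"
  shows "HH n L j r x \<le> HH n L j r y + 1"
proof -
  have "x = y \<or> (x \<le> n \<and> x \<noteq> j \<and> 1 \<le> y \<and> y \<le> n)
    \<or> (x = j \<and> y = n+1) \<or> (n < x \<and> x < n + L \<and> y = x+1) \<or> (x = n+L \<and> y = 0)"
    using assms(1) unfolding EE_def by auto
  then show ?thesis
  proof (elim disjE conjE)
    assume "x \<le> n" "x \<noteq> j" "1 \<le> y" "y \<le> n" then show ?thesis unfolding HH_def by simp
  next
    assume "x = j" "y = n+1" then show ?thesis using assms unfolding HH_def by simp
  next
    assume "n < x" "x < n + L" "y = x+1" then show ?thesis using assms unfolding HH_def by simp
  next
    assume "x = n+L" "y = 0" then show ?thesis using assms unfolding HH_def by simp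
  qed simp
qed

lemma relpow_H:
  assumes "(x,y) \<in> (EE n L j)^^k" "j \<in> {1..n}" "r \<in> {1..n}"
  shows "HH n L j r x \<le> HH n L j r y + k"
  using assms(1)
proof (induction k arbitrary: y)
  case 0 then show ?case by simp
next
  case (Suc k)
  from Suc.prems obtain z where "(x,z) \<in> (EE n L j)^^k" "(z,y) \<in> EE n L j" by (rule relpow_Suc_E)
  with Suc.IH E_H[OF _ assms(2,3)] show ?case by fastforce
qed

lemma NX_cases:
  assumes "x \<in> SS n L" "j \<in> {1..n}" "r \<in> {1..n}"
  obtains "x = r" "NX n L j r x = r" "HH n L j r x = 0"
  | "x \<noteq> r" "x \<le> n" "x \<noteq> j" "NX n L j r x = r" "HH n L j r x = 1"
  | "x \<noteq> r" "x = j" "NX n L j r x = n+1" "HH n L j r x = L+2"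
  | "x \<noteq> r" "n < x" "x < n + L" "NX n L j r x = x+1" "HH n L j r x = n+L+2-x"
  | "x \<noteq> r" "x = n + L" "n < x" "NX n L j r x = 0" "HH n L j r x = 2"
proof -
  have xl: "x \<le> n + L" using assms(1) by (simp add: SS_def)
  have jn: "j \<le> n" using assms(2) by simp
  show ?thesis
  proof (cases "x = r")
    case True then show ?thesis using that(1) by (simp add: NX_def HH_def)
  next
    case xr: False
    show ?thesis
    proof (cases "x \<le> n \<and> x \<noteq> j")
      case True then show ?thesis using that(2) xr by (simp add: NX_def HH_def)
    next
      case nF: False
      show ?thesis
      proof (cases "x = j")
        case True then show ?thesis using that(3) xr by (simp add: NX_def HH_def)
      next
        case False
        with nF jn have xn: "n < x" by simp
        show ?thesis
        proof (cases "x < n + L")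
          case True then show ?thesis using that(4) xr xn False by (simp add: NX_def HH_def)
        next
          case False2: False
          with xl have "x = n + L" by simp
          then show ?thesis using that(5) xr xn False by (simp add: NX_def HH_def)
        qed
      qed
    qed
  qed
qed

lemma NX_edge:
  assumes "x \<in> SS n L" "L \<ge> 1" "j \<in> {1..n}" "r \<in> {1..n}"
  shows "(x, NX n L j r x) \<in> EE n L j"
proof -
  have xl: "x \<le> n + L" using assms(1) by (simp add: SS_def)
  show ?thesis
    using assms(3,4)
    by (rule NX_cases[OF assms(1)]) (use xl assms(2-4) in \<open>simp_all add: EE_def\<close>)
qed

lemma NX_SS:
  assumes "x \<in> SS n L" "L \<ge> 1" "j \<in> {1..n}" "r \<in> {1..n}"
  shows "NX n L j r x \<in> SS n L"
  using NX_edge[OF assms] by (simp add: EE_def SS_def)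

lemma NX_H:
  assumes "x \<in> SS n L" "L \<ge> 1" "j \<in> {1..n}" "r \<in> {1..n}" "x \<noteq> r"
  shows "HH n L j r (NX n L j r x) + 1 = HH n L j r x"
  using assms(3,4)
proof (rule NX_cases[OF assms(1)])
  assume "x = r" then show ?thesis using assms(5) by simp
next
  assume "NX n L j r x = r" "HH n L j r x = 1" then show ?thesis by (simp add: HH_def)
next
  assume "x = j" "NX n L j r x = n+1" "HH n L j r x = L+2"
  then show ?thesis using assms(2-4) by (simp add: HH_def)
next
  assume "n < x" "x < n + L" "NX n L j r x = x+1" "HH n L j r x = n+L+2-x"
  then show ?thesis using assms(2-4) by (simp add: HH_def)
next
  assume "NX n L j r x = 0" "HH n L j r x = 2"
  then show ?thesis using assms(2-4) by (simp add: HH_def)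
qed

lemma H0:
  assumes "x \<in> SS n L" "j \<in> {1..n}" "r \<in> {1..n}" "HH n L j r x = 0"
  shows "x = r"
  using assms(2,3) by (rule NX_cases[OF assms(1)]) (use assms(4) in auto)

lemma path_H:
  assumes "x \<in> SS n L" "L \<ge> 1" "j \<in> {1..n}" "r \<in> {1..n}"
  shows "(x, r) \<in> (EE n L j)^^(HH n L j r x)"
  using assms(1)
proof (induction "HH n L j r x" arbitrary: x)
  case 0
  then show ?case using H0[OF 0(2) assms(3,4)] by simp
next
  case (Suc d)
  then have xr: "x \<noteq> r" by (auto simp: HH_def)
  have e: "(x, NX n L j r x) \<in> EE n L j" using NX_edge[OF Suc.prems assms(2-4)] .
  have h: "HH n L j r (NX n L j r x) = d" using NX_H[OF Suc.prems assms(2-4) xr] Suc.hyps(2) by simp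
  have "(NX n L j r x, r) \<in> (EE n L j)^^d" using Suc.hyps(1)[OF h[symmetric] NX_SS[OF Suc.prems assms(2-4)]] h by simp
  then show ?case using e relpow_Suc_I2 Suc.hyps(2) by metis
qed

lemma dist_H:
  assumes "x \<in> SS n L" "L \<ge> 1" "j \<in> {1..n}" "r \<in> {1..n}"
  shows "sp_dist (EE n L j) x r = HH n L j r x"
  unfolding sp_dist_def
proof (rule Least_equality)
  show "(x, r) \<in> (EE n L j)^^(HH n L j r x)" by (rule path_H[OF assms])
next
  fix k assume "(x, r) \<in> (EE n L j)^^k"
  from relpow_H[OF this assms(3,4)] show "HH n L j r x \<le> k" by (simp add: HH_def)
qed

lemma iter_path:
  assumes "x \<in> SS n L" "L \<ge> 1" "j \<in> {1..n}" "r \<in> {1..n}"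
  shows "(x, (NX n L j r ^^ m) x) \<in> (EE n L j)^^m \<and> (NX n L j r ^^ m) x \<in> SS n L"
proof (induction m)
  case 0 then show ?case using assms by simp
next
  case (Suc m)
  then show ?case using NX_edge[OF _ assms(2-4)] NX_SS[OF _ assms(2-4)] by auto
qed


lemma gauss_real: "(\<Sum>J=1..m. real J) = real m * (real m + 1) / 2"
  by (induction m) (auto simp: field_simps)

lemma g_pow_n:
  assumes "n \<ge> 1"
  shows "(1 - 1 / real n) ^ n \<le> 1/2"
proof -
  have g0: "0 \<le> 1 - 1 / real n" using assms by (simp add: field_simps)
  have "1 - 1 / real n \<le> exp (- 1 / real n)" using exp_ge_add_one_self[of "- 1 / real n"] by simp
  then have "(1 - 1 / real n) ^ n \<le> exp (- 1 / real n) ^ n" using g0 by (rule power_mono)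
  also have "\<dots> = exp (real n * (- 1 / real n))" by (rule exp_of_nat_mult[symmetric])
  also have "\<dots> = exp (-1)" using assms by simp
  also have "\<dots> \<le> 1/2"
  proof -
    have "2 \<le> exp (1::real)" using exp_ge_add_one_self[of 1] by simp
    then show ?thesis by (simp add: exp_minus field_simps)
  qed
  finally show ?thesis .
qed

lemma tail_small:
  assumes "n \<ge> 1"
  shows "(real n - 1) * (1 - 1 / real n) ^ (n*n + 3) \<le> 1"
proof -
  define g where "g = 1 - 1 / real n"
  have g0: "0 \<le> g" "g \<le> 1" using assms by (auto simp: g_def field_simps)
  have "g ^ (n*n+3) \<le> g ^ (n*n)" by (rule power_decreasing) (use g0 in auto)
  also have "\<dots> = (g ^ n) ^ n" by (simp add: power_mult)
  also have "\<dots> \<le> (1/2) ^ n" by (rule power_mono) (use g_pow_n[OF assms] g0 in \<open>auto simp: g_def\<close>)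
  finally have a: "g ^ (n*n+3) \<le> (1/2)^n" .
  have b: "real n \<le> 2 ^ n" using less_exp[of n] by (metis of_nat_le_iff of_nat_numeral of_nat_power less_imp_le)
  have b2: "real n - 1 \<le> 2 ^ n" using b by linarith
  have "(real n - 1) * g ^ (n*n+3) \<le> 2 ^ n * (1/2)^n"
    by (rule mult_mono[OF b2 a]) (use g0 in auto)
  also have "\<dots> = 1" by (simp add: power_mult_distrib[symmetric])
  finally show ?thesis by (simp add: g_def)
qed


theorem theorem2:
  fixes n :: nat and \<pi> :: det_local_policy
  assumes "n \<ge> 1"
    and "\<forall>x h v. \<pi> x h v \<in> {1..n}"
  shows "\<exists>S E s0 s nxt. crd_mdp n S E s0 s nxt \<and>
           policy_value n (1 - 1 / real n) E s0 s nxt \<pi> / OPT n (1 - 1 / real n) E s0 s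
             \<le> 24 / real n"
proof -
  define g where "g = 1 - 1 / real n"
  define L where "L = n*n"
  define v0 where "v0 = map (\<lambda>i::nat. g) [1..<Suc n]"
  define j where "j = \<pi> 0 [] v0"
  have j: "j \<in> {1..n}" using assms(2) by (simp add: j_def)
  have L1: "L \<ge> 1" using assms(1) by (simp add: L_def)
  have g0: "0 \<le> g" "g \<le> 1" using assms(1) by (auto simp: g_def field_simps)
  let ?E = "EE n L j"
  let ?nx = "NX n L j"
  let ?S = "SS n L"
  have dist: "\<And>x r. x \<in> ?S \<Longrightarrow> r \<in> {1..n} \<Longrightarrow> sp_dist ?E x r = HH n L j r x"
    by (rule dist_H[OF _ L1 j])
  have crd: "crd_mdp n ?S ?E 0 id ?nx"
    unfolding crd_mdp_def
  proof (intro conjI ballI impI)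
    show "finite ?S" by (simp add: SS_def)
    show "?E \<subseteq> ?S \<times> ?S" by (auto simp: EE_def SS_def)
    show "0 \<in> ?S" by (simp add: SS_def)
    show "id ` {1..n} \<subseteq> ?S" by (auto simp: SS_def)
    show "inj_on id {1..n}" by simp
  next
    fix x assume "x \<in> ?S"
    then have "(x, x) \<in> ?E" by (auto simp: EE_def SS_def)
    then show "\<exists>y. (x, y) \<in> ?E" by blast
  next
    fix x i assume x: "x \<in> ?S" and i: "i \<in> {1..n}"
    show "(x, id i) \<in> ?E\<^sup>*" using path_H[OF x L1 j i] by (simp add: relpow_imp_rtrancl)
  next
    fix x i assume x: "x \<in> ?S" and i: "i \<in> {1..n}" and xi: "x \<noteq> id i"
    show "(x, ?nx i x) \<in> ?E" by (rule NX_edge[OF x L1 j i])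
    show "Suc (sp_dist ?E (?nx i x) (id i)) = sp_dist ?E x (id i)"
      using dist[OF NX_SS[OF x L1 j i] i] dist[OF x i] NX_H[OF x L1 j i] xi by simp
  qed
  have ov0: "option_values n g ?E id 0 = v0"
    unfolding option_values_def v0_def
  proof (rule map_cong[OF refl])
    fix i assume "i \<in> set [1..<Suc n]"
    then have i: "i \<in> {1..n}" by auto
    have "sp_dist ?E 0 (id i) = 1" using dist[OF _ i, of 0] i j by (auto simp: SS_def HH_def)
    then show "g ^ sp_dist ?E 0 (id i) = g" by simp
  qed
  have inv: "case run n g ?E 0 id ?nx \<pi> k of (x,t,h) \<Rightarrow> x \<in> ?S \<and> (k = 0 \<longrightarrow> x = 0 \<and> t = 0 \<and> h = [])
      \<and> (0 < k \<longrightarrow> 1 \<le> t \<and> (j,x) \<in> ?E^^(t-1))" for k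
  proof (induction k)
    case 0 show ?case by (simp add: SS_def)
  next
    case (Suc k)
    obtain x t h where r: "run n g ?E 0 id ?nx \<pi> k = (x,t,h)" by (cases "run n g ?E 0 id ?nx \<pi> k") auto
    define j' where "j' = \<pi> x h (option_values n g ?E id x)"
    have j': "j' \<in> {1..n}" using assms(2) j'_def by simp
    have runS: "\<exists>h'. run n g ?E 0 id ?nx \<pi> (Suc k) = (j', t + sp_dist ?E x j', h')"
      by (simp add: r Let_def j'_def)
    then obtain h' where rS: "run n g ?E 0 id ?nx \<pi> (Suc k) = (j', t + sp_dist ?E x j', h')" by blast
    have I: "x \<in> ?S" "k = 0 \<longrightarrow> x = 0 \<and> t = 0 \<and> h = []" "0 < k \<longrightarrow> 1 \<le> t \<and> (j,x) \<in> ?E^^(t-1)"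
      using Suc.IH unfolding r by auto
    have j'S: "j' \<in> ?S" using j' by (auto simp: SS_def)
    show ?case
    proof (cases "k = 0")
      case True
      with I have x0: "x = 0" "t = 0" "h = []" by auto
      then have "j' = j" using ov0 by (simp add: j'_def j_def)
      moreover have "sp_dist ?E x j = 1" using dist[OF I(1) j] x0 j by (simp add: HH_def)
      ultimately show ?thesis unfolding rS using x0 j'S by simp
    next
      case False
      with I have t1: "1 \<le> t" and jx: "(j,x) \<in> ?E^^(t-1)" by auto
      have "(x, j') \<in> ?E^^(sp_dist ?E x j')" using path_H[OF I(1) L1 j j'] dist[OF I(1) j'] by simp
      with jx have "(j, j') \<in> ?E^^((t-1) + sp_dist ?E x j')" by (auto simp: relpow_add)
      moreover have "(t-1) + sp_dist ?E x j' = t + sp_dist ?E x j' - 1" using t1 by simp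
      ultimately show ?thesis unfolding rS using j'S t1 by simp
    qed
  qed
  have vis: "1 \<le> \<tau> \<and> (i \<noteq> j \<longrightarrow> L + 3 \<le> \<tau>)"
    if i: "i \<in> {1..n}" and tau: "\<tau> \<in> visit_times n g ?E 0 id ?nx \<pi> i" for i \<tau>
  proof -
    from tau obtain k x t h m where r: "run n g ?E 0 id ?nx \<pi> k = (x,t,h)" and te: "\<tau> = t + m"
      and m: "m \<le> sp_dist ?E x (\<pi> x h (option_values n g ?E id x))"
      and p: "(?nx (\<pi> x h (option_values n g ?E id x)) ^^ m) x = i"
      unfolding visit_times_def Let_def by auto
    define j' where "j' = \<pi> x h (option_values n g ?E id x)"
    have j': "j' \<in> {1..n}" using assms(2) j'_def by simp
    have I: "x \<in> ?S" "k = 0 \<longrightarrow> x = 0 \<and> t = 0 \<and> h = []" "0 < k \<longrightarrow> 1 \<le> t \<and> (j,x) \<in> ?E^^(t-1)"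
      using inv[of k] unfolding r by auto
    show ?thesis
    proof (cases "k = 0")
      case True
      with I have x0: "x = 0" "t = 0" "h = []" by auto
      then have jj: "j' = j" using ov0 by (simp add: j'_def j_def)
      have "sp_dist ?E x j = 1" using dist[OF I(1) j] x0 j by (simp add: HH_def)
      with m jj have m1: "m \<le> 1" by (simp add: j'_def)
      have "m \<noteq> 0"
      proof
        assume "m = 0"
        then have "i = 0" using p x0 by simp
        then show False using i by simp
      qed
      with m1 have "m = 1" by simp
      then have "i = j" using p x0 jj j by (simp add: j'_def NX_def)
      then show ?thesis using te x0 \<open>m = 1\<close> by simp
    next
      case False
      with I have t1: "1 \<le> t" and jx: "(j,x) \<in> ?E^^(t-1)" by auto
      have "(x, i) \<in> ?E^^m" using iter_path[OF I(1) L1 j j', of m] p by (simp add: j'_def)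
      with jx have "(j, i) \<in> ?E^^((t-1) + m)" by (auto simp: relpow_add)
      from relpow_H[OF this j i] have "HH n L j i j \<le> t - 1 + m" by (simp add: HH_def)
      then have "i \<noteq> j \<longrightarrow> L + 2 \<le> t - 1 + m" using j by (auto simp: HH_def)
      then show ?thesis using te t1 by auto
    qed
  qed
  define f where "f i = (if i = j then g else g ^ (L+3))" for i
  let ?VT = "visit_times n g ?E 0 id ?nx \<pi>"
  have pol: "policy_value n g ?E 0 id ?nx \<pi> \<le> g + (real n - 1) * g ^ (L+3)"
  proof -
    have "policy_value n g ?E 0 id ?nx \<pi> = (\<Sum>i\<in>{i\<in>{1..n}. ?VT i \<noteq> {}}. g ^ (LEAST t. t \<in> ?VT i))"
      by (simp add: policy_value_def)
    also have "\<dots> \<le> (\<Sum>i\<in>{i\<in>{1..n}. ?VT i \<noteq> {}}. f i)"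
    proof (rule sum_mono)
      fix i assume "i \<in> {i\<in>{1..n}. ?VT i \<noteq> {}}"
      then have i: "i \<in> {1..n}" and ne: "?VT i \<noteq> {}" by auto
      then have "(LEAST t. t \<in> ?VT i) \<in> ?VT i" by (metis LeastI_ex ex_in_conv)
      from vis[OF i this] have N: "1 \<le> (LEAST t. t \<in> ?VT i)"
        "i \<noteq> j \<longrightarrow> L + 3 \<le> (LEAST t. t \<in> ?VT i)" by auto
      show "g ^ (LEAST t. t \<in> ?VT i) \<le> f i"
      proof (cases "i = j")
        case True
        have "g ^ (LEAST t. t \<in> ?VT i) \<le> g ^ 1" by (rule power_decreasing[OF N(1) g0])
        then show ?thesis using True by (simp add: f_def)
      next
        case False
        then have "g ^ (LEAST t. t \<in> ?VT i) \<le> g ^ (L+3)" using N(2) by (intro power_decreasing g0) auto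
        then show ?thesis using False by (simp add: f_def)
      qed
    qed
    also have "\<dots> \<le> (\<Sum>i\<in>{1..n}. f i)"
      by (rule sum_mono2) (use g0 in \<open>auto simp: f_def\<close>)
    also have "\<dots> = f j + (\<Sum>i\<in>{1..n} - {j}. f i)" using j by (simp add: sum.remove)
    also have "\<dots> = g + (real n - 1) * g ^ (L+3)"
    proof -
      have "(\<Sum>i\<in>{1..n} - {j}. f i) = (\<Sum>i\<in>{1..n} - {j}. g ^ (L+3))"
        by (rule sum.cong) (auto simp: f_def)
      also have "\<dots> = real (n - 1) * g ^ (L+3)" using j by simp
      finally show ?thesis using assms(1) by (simp add: f_def of_nat_diff)
    qed
    finally show ?thesis .
  qed
  define \<sigma> where "\<sigma> = Transposition.transpose j n"
  have \<sigma>p: "\<sigma> permutes {1..n}" unfolding \<sigma>_def by (rule permutes_swap_id) (use j assms(1) in auto)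
  have finO: "finite {order_value n g ?E 0 id \<sigma> | \<sigma>. \<sigma> permutes {1..n}}"
  proof -
    have "{order_value n g ?E 0 id \<sigma> | \<sigma>. \<sigma> permutes {1..n}} = (\<lambda>\<sigma>. order_value n g ?E 0 id \<sigma>) ` {\<sigma>. \<sigma> permutes {1..n}}"
      by blast
    then show ?thesis using finite_permutations[of "{1..n::nat}"] by simp
  qed
  have OPTge: "order_value n g ?E 0 id \<sigma> \<le> OPT n g ?E 0 id"
    unfolding OPT_def by (rule Max_ge[OF finO]) (use \<sigma>p in blast)
  have ov_nn: "0 \<le> order_value n g ?E 0 id \<sigma>"
    unfolding order_value_def Let_def using g0 by (auto intro: sum_nonneg)
  show ?thesis
  proof (intro exI conjI)
    show "crd_mdp n ?S ?E 0 id ?nx" by (rule crd)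
    show "policy_value n (1 - 1 / real n) ?E 0 id ?nx \<pi> / OPT n (1 - 1 / real n) ?E 0 id \<le> 24 / real n"
    proof (cases "n = 1")
      case True
      then have "g = 0" by (simp add: g_def)
      with pol have "policy_value n g ?E 0 id ?nx \<pi> \<le> 0" using True by simp
      moreover have "0 \<le> OPT n g ?E 0 id" using OPTge ov_nn by linarith
      ultimately have "policy_value n g ?E 0 id ?nx \<pi> / OPT n g ?E 0 id \<le> 0"
        by (simp add: divide_nonpos_nonneg)
      then show ?thesis using True by (simp add: g_def)
    next
      case False
      with assms(1) have n2: "n \<ge> 2" by simp
      have OPTlb: "(real n - 1) / 2 \<le> OPT n g ?E 0 id"
      proof -
        define pt where "pt t = (if t = 0 then 0 else \<sigma> t)" for t :: nat
        have ov: "order_value n g ?E 0 id \<sigma> = (\<Sum>J=1..n. g ^ (\<Sum>t=1..J. sp_dist ?E (pt (t-1)) (pt t)))"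
          by (simp add: order_value_def Let_def pt_def id_def)
        have \<sigma>in: "\<sigma> a \<in> {1..n}" if "a \<in> {1..n}" for a
          using permutes_in_image[OF \<sigma>p] that by blast
        have \<sigma>nj: "\<sigma> a \<noteq> j" if "a \<in> {1..n}" "a \<noteq> n" for a
          using that j by (auto simp: \<sigma>_def transpose_def)
        have step: "sp_dist ?E (pt (t-1)) (pt t) \<le> 1" if t: "1 \<le> t" "t \<le> n - 1" for t
        proof -
          have r: "pt t \<in> {1..n}" using \<sigma>in[of t] t by (simp add: pt_def)
          have F: "pt (t-1) \<le> n \<and> pt (t-1) \<noteq> j"
          proof (cases "t = 1")
            case True then show ?thesis using j by (simp add: pt_def)
          next
            case False
            then have "t - 1 \<in> {1..n}" "t - 1 \<noteq> n" using t by auto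
            then show ?thesis using \<sigma>in[of "t-1"] \<sigma>nj[of "t-1"] False t by (simp add: pt_def)
          qed
          then have "pt (t-1) \<in> ?S" by (simp add: SS_def)
          from dist[OF this r] F show ?thesis by (simp add: HH_def)
        qed
        have inner: "(\<Sum>t=1..J. sp_dist ?E (pt (t-1)) (pt t)) \<le> J" if "J \<le> n - 1" for J
        proof -
          have "(\<Sum>t=1..J. sp_dist ?E (pt (t-1)) (pt t)) \<le> (\<Sum>t=1..J. 1)"
            by (rule sum_mono) (use step that in auto)
          then show ?thesis by simp
        qed
        have "(\<Sum>J=1..n-1. g ^ J) \<le> (\<Sum>J=1..n-1. g ^ (\<Sum>t=1..J. sp_dist ?E (pt (t-1)) (pt t)))"
          by (rule sum_mono) (use inner g0 in \<open>auto intro: power_decreasing\<close>)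
        also have "\<dots> \<le> (\<Sum>J=1..n. g ^ (\<Sum>t=1..J. sp_dist ?E (pt (t-1)) (pt t)))"
          by (rule sum_mono2) (use g0 in auto)
        finally have A: "(\<Sum>J=1..n-1. g ^ J) \<le> order_value n g ?E 0 id \<sigma>" using ov by simp
        have B: "(\<Sum>J=1..n-1. (1 - real J / real n)) \<le> (\<Sum>J=1..n-1. g ^ J)"
        proof (rule sum_mono)
          fix J assume "J \<in> {1..n-1}"
          have "-1 \<le> - 1 / real n" using assms(1) by (simp add: field_simps)
          from Bernoulli_inequality[OF this, of J] show "1 - real J / real n \<le> g ^ J"
            by (simp add: g_def)
        qed
        have C: "(\<Sum>J=1..n-1. (1 - real J / real n)) = (real n - 1) / 2"
        proof -
          have "(\<Sum>J=1..n-1. (1 - real J / real n)) = real (n-1) - (\<Sum>J=1..n-1. real J) / real n"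
            by (simp add: sum_subtractf sum_divide_distrib)
          also have "\<dots> = real (n-1) - real (n-1) * (real (n-1) + 1) / 2 / real n"
            unfolding gauss_real[of "n-1"] by simp
          also have "\<dots> = (real n - 1) / 2" using assms(1) by (simp add: of_nat_diff field_simps)
          finally show ?thesis .
        qed
        show ?thesis using A B C OPTge by linarith
      qed
      have P2: "policy_value n g ?E 0 id ?nx \<pi> \<le> 2"
      proof -
        have "(real n - 1) * g ^ (L+3) \<le> 1" using tail_small[OF assms(1)] by (simp add: L_def g_def)
        then show ?thesis using pol g0 by linarith
      qed
      have Opos: "0 < (real n - 1) / 2" using n2 by simp
      have "policy_value n g ?E 0 id ?nx \<pi> / OPT n g ?E 0 id \<le> 2 / OPT n g ?E 0 id"
        using P2 OPTlb Opos by (intro divide_right_mono) auto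
      also have "\<dots> \<le> 2 / ((real n - 1) / 2)"
        using OPTlb Opos by (intro divide_left_mono) auto
      also have "\<dots> \<le> 24 / real n" using n2 by (simp add: field_simps)
      finally show ?thesis by (simp add: g_def)
    qed
  qed
qed

end
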